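(* Consider the eigencurve learning-rate sequence $\{\eta_t\}$ described in the context, and let $\lambda_j$ be an eigenvalue of $H$. For integers $t\ge0$ define $$v_{t+1,j}=\sum_{k=0}^t\eta_k^2\prod_{i=k+1}^t(1-\eta_i\lambda_j)^2 .$$ Then for all integers $1\le t\le t'$ (within the range where the schedule is defined), $$v_{t',j}\le\max\left(v_{t,j},\,\eta_t/\lambda_j\right).$$
   Context: Let $H\in\mathbb{R}^{d\times d}$ be symmetric positive definite, with $\mu=\lambda_{\min}(H)$, $L=\lambda_{\max}(H)$ and $\kappa=L/\mu$. Let $I_{\max}=\log_2\kappa$, treated as an integer. Fix integers $0=t_0<\dots<t_{I_{\max}}=T$ with $\Delta_i=t_i-t_{i-1}$. The eigencurve learning rate is $$\eta_t=\frac{1}{L+\mu\sum_{j=1}^{i-1}\Delta_j2^{j-1}+2^{i-1}\mu(t-t_{i-1})}\quad\text{for }t\in[t_{i-1},t_i).$$ In particular $\eta_t\le1/L$ and $\eta_t$ is nonincreasing in $t$. *)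

theory Defs
  imports "HOL-Analysis.Analysis"
begin

definition mat_eigenvalue :: "real^'n^'n \<Rightarrow> real \<Rightarrow> bool" where
  "mat_eigenvalue H l \<longleftrightarrow> (\<exists>v. v \<noteq> 0 \<and> H *v v = l *\<^sub>R v)"

definition lambda_min :: "real^'n^'n \<Rightarrow> real" where
  "lambda_min H = Min {l. mat_eigenvalue H l}"

definition lambda_max :: "real^'n^'n \<Rightarrow> real" where
  "lambda_max H = Max {l. mat_eigenvalue H l}"

definition pos_def_mat :: "real^'n^'n \<Rightarrow> bool" where
  "pos_def_mat H \<longleftrightarrow> (\<forall>x. x \<noteq> 0 \<longrightarrow> x \<bullet> (H *v x) > 0)"

text \<open>Eigencurve schedule: for t in [tt (i-1), tt i), 1 <= i <= Imax;
  set to 0 outside [0, tt Imax) where the schedule is not defined.\<close>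
definition eigencurve_lr :: "real \<Rightarrow> real \<Rightarrow> (nat \<Rightarrow> nat) \<Rightarrow> nat \<Rightarrow> nat \<Rightarrow> real" where
  "eigencurve_lr L \<mu> tt Imax t =
    (if \<exists>i\<in>{1..Imax}. tt (i-1) \<le> t \<and> t < tt i then
       (let i = (THE i. i \<in> {1..Imax} \<and> tt (i-1) \<le> t \<and> t < tt i) in
        1 / (L + \<mu> * (\<Sum>j=1..i-1. real (tt j - tt (j-1)) * 2^(j-1))
               + 2^(i-1) * \<mu> * real (t - tt (i-1))))
     else 0)"

text \<open>v t = sum_{k=0}^{t-1} eta_k^2 prod_{i=k+1}^{t-1} (1 - eta_i lam)^2, so that
  v (t+1) matches the paper's v_{t+1,j}.\<close>
definition eig_v :: "(nat \<Rightarrow> real) \<Rightarrow> real \<Rightarrow> nat \<Rightarrow> real" where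
  "eig_v \<eta> lam t = (\<Sum>k<t. (\<eta> k)^2 * (\<Prod>i\<in>{k+1..<t}. (1 - \<eta> i * lam)^2))"

end

theory Submission
  imports Defs
begin

lemma sym_inner:
  fixes H :: "real^'n^'n"
  assumes "transpose H = H"
  shows "(H *v x) \<bullet> y = x \<bullet> (H *v y)"
proof -
  have "x \<bullet> (H *v y) = (x v* H) \<bullet> y" by (simp add: dot_lmul_matrix)
  also have "x v* H = transpose H *v x" by simp
  finally show ?thesis using assms by simp
qed

lemma eig_pos:
  fixes H :: "real^'n^'n"
  assumes "pos_def_mat H" "mat_eigenvalue H l"
  shows "l > 0"
proof -
  obtain v where v: "v \<noteq> 0" "H *v v = l *\<^sub>R v" using assms(2) mat_eigenvalue_def by blast
  have "v \<bullet> (H *v v) > 0" using assms(1) v(1) pos_def_mat_def by blast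
  hence "l * (v \<bullet> v) > 0" using v(2) by simp
  moreover have "v \<bullet> v > 0" using v(1) by simp
  ultimately show ?thesis by (simp add: zero_less_mult_iff)
qed

lemma eig_finite:
  fixes H :: "real^'n^'n"
  assumes sym: "transpose H = H"
  shows "finite {l. mat_eigenvalue H l}"
proof -
  define E where "E = {l. mat_eigenvalue H l}"
  define vc where "vc l = (SOME v. v \<noteq> 0 \<and> H *v v = l *\<^sub>R v)" for l
  have vc: "vc l \<noteq> 0 \<and> H *v vc l = l *\<^sub>R vc l" if "l \<in> E" for l
    using that unfolding E_def mat_eigenvalue_def vc_def by (metis (mono_tags, lifting) someI_ex mem_Collect_eq)
  have inj: "inj_on vc E"
  proof (rule inj_onI)
    fix a b assume ab: "a \<in> E" "b \<in> E" "vc a = vc b"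
    hence "a *\<^sub>R vc a = b *\<^sub>R vc a" using vc by metis
    thus "a = b" using vc[OF ab(1)] by (simp add: scaleR_cancel_right)
  qed
  have orth: "vc a \<bullet> vc b = 0" if "a \<in> E" "b \<in> E" "a \<noteq> b" for a b
  proof -
    have "(H *v vc a) \<bullet> vc b = vc a \<bullet> (H *v vc b)" using sym_inner[OF sym] .
    hence "a * (vc a \<bullet> vc b) = b * (vc a \<bullet> vc b)" using vc[OF that(1)] vc[OF that(2)] by simp
    thus ?thesis using that(3) by simp
  qed
  have "pairwise orthogonal (vc ` E)"
    unfolding pairwise_def orthogonal_def using orth by auto
  moreover have "0 \<notin> vc ` E" using vc by auto
  ultimately have "independent (vc ` E)" by (rule pairwise_orthogonal_independent)
  hence "finite (vc ` E)" by (rule independent_imp_finite)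
  thus ?thesis using inj finite_imageD E_def by blast
qed

lemma eig_v_Suc:
  "eig_v \<eta> lam (Suc s) = (\<eta> s)^2 + (1 - \<eta> s * lam)^2 * eig_v \<eta> lam s"
proof -
  have "eig_v \<eta> lam (Suc s) = (\<Sum>k<s. (\<eta> k)^2 * (\<Prod>i\<in>{k+1..<Suc s}. (1 - \<eta> i * lam)^2)) + (\<eta> s)^2"
    unfolding eig_v_def by simp
  also have "(\<Sum>k<s. (\<eta> k)^2 * (\<Prod>i\<in>{k+1..<Suc s}. (1 - \<eta> i * lam)^2))
      = (\<Sum>k<s. (1 - \<eta> s * lam)^2 * ((\<eta> k)^2 * (\<Prod>i\<in>{k+1..<s}. (1 - \<eta> i * lam)^2)))"
  proof (rule sum.cong)
    fix k assume "k \<in> {..<s}"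
    hence "{k+1..<Suc s} = insert s {k+1..<s}" by auto
    thus "(\<eta> k)^2 * (\<Prod>i\<in>{k+1..<Suc s}. (1 - \<eta> i * lam)^2) = (1 - \<eta> s * lam)^2 * ((\<eta> k)^2 * (\<Prod>i\<in>{k+1..<s}. (1 - \<eta> i * lam)^2))"
      by simp
  qed simp
  finally show ?thesis unfolding eig_v_def by (simp add: sum_distrib_left)
qed


lemma tt_mono:
  assumes "\<forall>i<Imax. tt i < tt (Suc i)" "i \<le> j" "j \<le> Imax"
  shows "tt i \<le> (tt j :: nat)"
  using assms(2,3)
proof (induction j)
  case 0 thus ?case by simp
next
  case (Suc j)
  show ?case
  proof (cases "i = Suc j")
    case False
    hence "tt i \<le> tt j" using Suc by simp
    also have "tt j < tt (Suc j)" using assms(1) Suc.prems by simp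
    finally show ?thesis by simp
  qed simp
qed

lemma tt_strict:
  assumes "\<forall>i<Imax. tt i < tt (Suc i)" "i < j" "j \<le> Imax"
  shows "tt i < (tt j :: nat)"
proof -
  have "tt i < tt (Suc i)" using assms by simp
  also have "tt (Suc i) \<le> tt j" using tt_mono[OF assms(1)] assms by simp
  finally show ?thesis .
qed

definition Dn :: "real \<Rightarrow> real \<Rightarrow> (nat \<Rightarrow> nat) \<Rightarrow> nat \<Rightarrow> nat \<Rightarrow> real" where
  "Dn L \<mu> tt i t = L + \<mu> * (\<Sum>j=1..i-1. real (tt j - tt (j-1)) * 2^(j-1))
               + 2^(i-1) * \<mu> * real (t - tt (i-1))"

lemma lr_eq:
  assumes st: "\<forall>i<Imax. tt i < tt (Suc i)" and i: "i \<in> {1..Imax}" "tt (i-1) \<le> t" "t < tt i"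
  shows "eigencurve_lr L \<mu> tt Imax t = 1 / Dn L \<mu> tt i t"
proof -
  have uniq: "j = i" if "j \<in> {1..Imax}" "tt (j-1) \<le> t" "t < tt j" for j
  proof (rule ccontr)
    assume "j \<noteq> i"
    then consider "j < i" | "i < j" by linarith
    thus False
    proof cases
      case 1
      have a: "j \<le> i-1" using 1 by linarith
      have b: "i-1 \<le> Imax" using i(1) by auto
      have "tt j \<le> tt (i-1)" by (rule tt_mono[OF st a b])
      thus False using that i by linarith
    next
      case 2
      have a: "i \<le> j-1" using 2 by linarith
      have b: "j-1 \<le> Imax" using that(1) by auto
      have "tt i \<le> tt (j-1)" by (rule tt_mono[OF st a b])
      thus False using that i by linarith
    qed
  qed
  have "(THE j. j \<in> {1..Imax} \<and> tt (j-1) \<le> t \<and> t < tt j) = i"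
  proof (rule the_equality)
    show "i \<in> {1..Imax} \<and> tt (i-1) \<le> t \<and> t < tt i" using i by blast
  next
    fix j assume "j \<in> {1..Imax} \<and> tt (j-1) \<le> t \<and> t < tt j"
    thus "j = i" using uniq by blast
  qed
  moreover have "\<exists>i\<in>{1..Imax}. tt (i-1) \<le> t \<and> t < tt i" using i by blast
  ultimately show ?thesis unfolding eigencurve_lr_def Dn_def Let_def by simp
qed

lemma seg_exists:
  fixes tt :: "nat \<Rightarrow> nat"
  assumes "tt 0 = 0" "\<forall>i<Imax. tt i < tt (Suc i)" "tt Imax = T" "t < T"
  shows "\<exists>i\<in>{1..Imax}. tt (i-1) \<le> t \<and> t < tt i"
proof -
  define i where "i = (LEAST i. t < tt i)"
  have ex: "t < tt Imax" using assms by simp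
  have ti: "t < tt i" unfolding i_def by (rule LeastI[of _ Imax]) (rule ex)
  have le: "i \<le> Imax" unfolding i_def by (rule Least_le) (rule ex)
  have i1: "i \<ge> 1" using ti assms(1) by (cases i) auto
  have "\<not> t < tt (i-1)" unfolding i_def
    by (rule not_less_Least) (use i1 i_def in auto)
  thus ?thesis using ti le i1 by (intro bexI[of _ i]) auto
qed

lemma Dn_ge:
  assumes "\<mu> > 0"
  shows "Dn L \<mu> tt i t \<ge> L"
  unfolding Dn_def using assms by (auto intro!: add_nonneg_nonneg mult_nonneg_nonneg sum_nonneg)

lemma lr_bounds:
  assumes "tt 0 = 0" "\<forall>i<Imax. tt i < tt (Suc i)" "tt Imax = T" "t < T" "L > 0" "\<mu> > 0"
  shows "eigencurve_lr L \<mu> tt Imax t > 0 \<and> eigencurve_lr L \<mu> tt Imax t \<le> 1 / L"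
proof -
  obtain i where i: "i\<in>{1..Imax}" "tt (i-1) \<le> t" "t < tt i" using seg_exists[OF assms(1-4)] by blast
  have DL: "Dn L \<mu> tt i t \<ge> L" using Dn_ge assms by blast
  have e: "eigencurve_lr L \<mu> tt Imax t = 1 / Dn L \<mu> tt i t" by (rule lr_eq[OF assms(2) i])
  have "1 / Dn L \<mu> tt i t > 0" using DL assms(5) by simp
  moreover have "1 / Dn L \<mu> tt i t \<le> 1 / L" by (rule frac_le) (use DL assms(5) in auto)
  ultimately show ?thesis unfolding e by blast
qed

lemma lr_step:
  assumes "tt 0 = 0" "\<forall>i<Imax. tt i < tt (Suc i)" "tt Imax = T" "Suc s < T" "L > 0" "\<mu> > 0"
  shows "eigencurve_lr L \<mu> tt Imax (Suc s) \<le> eigencurve_lr L \<mu> tt Imax s"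
proof -
  obtain i where i: "i\<in>{1..Imax}" "tt (i-1) \<le> s" "s < tt i" using seg_exists[OF assms(1-3), of s] assms(4) by auto
  have pos: "Dn L \<mu> tt i s > 0" using Dn_ge[of \<mu> L tt i s] assms by linarith
  show ?thesis
  proof (cases "Suc s < tt i")
    case True
    have "real (s - tt (i-1)) \<le> real (Suc s - tt (i-1))" by simp
    hence "2^(i-1) * \<mu> * real (s - tt (i-1)) \<le> 2^(i-1) * \<mu> * real (Suc s - tt (i-1))"
      using assms(6) by (intro mult_left_mono) auto
    hence le: "Dn L \<mu> tt i s \<le> Dn L \<mu> tt i (Suc s)"
      unfolding Dn_def by linarith
    have i3: "tt (i-1) \<le> Suc s" using i by simp
    have "eigencurve_lr L \<mu> tt Imax (Suc s) = 1 / Dn L \<mu> tt i (Suc s)"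
      by (rule lr_eq[OF assms(2) i(1) i3 True])
    also have "\<dots> \<le> 1 / Dn L \<mu> tt i s" by (rule frac_le) (use le pos in auto)
    also have "\<dots> = eigencurve_lr L \<mu> tt Imax s" by (rule lr_eq[OF assms(2) i, symmetric])
    finally show ?thesis .
  next
    case False
    hence eq: "Suc s = tt i" using i by simp
    have iI: "i < Imax"
    proof (rule ccontr)
      assume "\<not> i < Imax" hence "i = Imax" using i by simp
      hence "tt i = T" using assms(3) by simp
      thus False using eq assms(4) by linarith
    qed
    have i2: "Suc i \<in> {1..Imax}" "tt (Suc i - 1) \<le> Suc s" "Suc s < tt (Suc i)"
      using iI eq assms(2) by auto
    obtain m where m: "i = Suc m" using i by (cases i) auto
    have distr: "\<And>a b c d::real. a*(b + c*d) = a*b + d*a*c" by (simp add: algebra_simps)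
    have "Dn L \<mu> tt (Suc i) (Suc s) = L + \<mu> * (\<Sum>j=1..i. real (tt j - tt (j-1)) * 2^(j-1))"
      unfolding Dn_def using eq by simp
    also have "(\<Sum>j=1..i. real (tt j - tt (j-1)) * 2^(j-1))
        = (\<Sum>j=1..i-1. real (tt j - tt (j-1)) * 2^(j-1)) + real (tt i - tt (i-1)) * 2^(i-1)"
      using m by simp
    finally have e1: "Dn L \<mu> tt (Suc i) (Suc s) = L + \<mu> * (\<Sum>j=1..i-1. real (tt j - tt (j-1)) * 2^(j-1))
        + 2^(i-1) * \<mu> * real (tt i - tt (i-1))"
      using distr[of \<mu> "\<Sum>j=1..i-1. real (tt j - tt (j-1)) * 2^(j-1)" "real (tt i - tt (i-1))" "2^(i-1)"]
      by linarith
    have "real (s - tt (i-1)) \<le> real (tt i - tt (i-1))" using i by simp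
    hence "2^(i-1) * \<mu> * real (s - tt (i-1)) \<le> 2^(i-1) * \<mu> * real (tt i - tt (i-1))"
      using assms(6) by (intro mult_left_mono) auto
    hence le: "Dn L \<mu> tt i s \<le> Dn L \<mu> tt (Suc i) (Suc s)" using e1 unfolding Dn_def by linarith
    have "eigencurve_lr L \<mu> tt Imax (Suc s) = 1 / Dn L \<mu> tt (Suc i) (Suc s)"
      by (rule lr_eq[OF assms(2) i2])
    also have "\<dots> \<le> 1 / Dn L \<mu> tt i s" by (rule frac_le) (use le pos in auto)
    also have "\<dots> = eigencurve_lr L \<mu> tt Imax s" by (rule lr_eq[OF assms(2) i, symmetric])
    finally show ?thesis .
  qed
qed


lemma step_bound:
  fixes e lam v B c :: real
  assumes "lam > 0" "e > 0" "e * lam \<le> 1" "e \<le> c" "v \<le> max B (c / lam)"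
  shows "e^2 + (1 - e * lam)^2 * v \<le> max B (c / lam)"
proof (cases "v \<le> e / lam")
  case True
  define x where "x = e * lam"
  have x: "0 < x" "x \<le> 1" using assms x_def by auto
  have "(1 - e * lam)^2 * v \<le> (1 - e * lam)^2 * (e / lam)" using True by (intro mult_left_mono) auto
  moreover have "e^2 + (1 - e * lam)^2 * (e / lam) = e / lam + (e / lam) * (x * (x - 1))"
    unfolding x_def using assms(1) by (simp add: field_simps power2_eq_square)
  moreover have "(e / lam) * (x * (x - 1)) \<le> 0"
    using x assms(1,2) by (intro mult_nonneg_nonpos) (auto intro: mult_nonneg_nonpos)
  moreover have "e / lam \<le> c / lam" using assms by (simp add: divide_right_mono)
  ultimately have "e^2 + (1 - e * lam)^2 * v \<le> c / lam" by linarith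
  thus ?thesis by (meson order_trans max.cobounded2)
next
  case False
  define x where "x = e * lam"
  have x: "0 < x" "x \<le> 1" using assms x_def by auto
  have "e / lam * (x * (2 - x)) \<le> v * (x * (2 - x))"
    using False x by (intro mult_right_mono) auto
  moreover have "e / lam * (x * (2 - x)) = e^2 * (2 - x)"
    unfolding x_def using assms(1) by (simp add: field_simps power2_eq_square)
  moreover have "e^2 * (2 - x) \<ge> e^2" using x by (simp add: mult_le_cancel_left1)
  moreover have "e^2 + (1 - e * lam)^2 * v = v - v * (x * (2 - x)) + e^2"
    unfolding x_def by (simp add: algebra_simps power2_eq_square)
  ultimately have "e^2 + (1 - e * lam)^2 * v \<le> v" by linarith
  thus ?thesis using assms(5) by linarith
qed

theorem lemma10:
  fixes H :: "real^'n^'n" and tt :: "nat \<Rightarrow> nat" and Imax T t t' :: nat and lam :: real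
  assumes "transpose H = H" and "pos_def_mat H"
    and "lambda_max H / lambda_min H = 2 ^ Imax"
    and "tt 0 = 0" and "\<forall>i<Imax. tt i < tt (Suc i)" and "tt Imax = T"
    and "mat_eigenvalue H lam"
    and "1 \<le> t" and "t \<le> t'" and "t' \<le> T"
  shows "eig_v (eigencurve_lr (lambda_max H) (lambda_min H) tt Imax) lam t'
         \<le> max (eig_v (eigencurve_lr (lambda_max H) (lambda_min H) tt Imax) lam t)
                (eigencurve_lr (lambda_max H) (lambda_min H) tt Imax t / lam)"
proof -
  define L where "L = lambda_max H"
  define \<mu> where "\<mu> = lambda_min H"
  define \<eta> where "\<eta> = eigencurve_lr L \<mu> tt Imax"
  define B where "B = max (eig_v \<eta> lam t) (\<eta> t / lam)"
  have fin: "finite {l. mat_eigenvalue H l}" using eig_finite assms(1) by blast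
  have lamE: "lam \<in> {l. mat_eigenvalue H l}" using assms(7) by simp
  have lamL: "lam \<le> L" unfolding L_def lambda_max_def using fin lamE by (rule Max_ge)
  have "\<mu> \<in> {l. mat_eigenvalue H l}" unfolding \<mu>_def lambda_min_def using fin lamE by (intro Min_in) auto
  hence mupos: "\<mu> > 0" using eig_pos assms(2) by blast
  have lampos: "lam > 0" using eig_pos assms(2,7) by blast
  have Lpos: "L > 0" using lamL lampos by linarith
  have bnd: "\<eta> s > 0 \<and> \<eta> s \<le> 1 / L" if "s < T" for s
    unfolding \<eta>_def using lr_bounds[OF assms(4,5,6) that Lpos mupos] .
  have mono: "\<eta> s \<le> \<eta> t" if "t \<le> s" "s < T" for s
    using that
  proof (induction s rule: dec_induct)
    case base thus ?case by simp
  next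
    case (step s)
    have "\<eta> (Suc s) \<le> \<eta> s" unfolding \<eta>_def using lr_step[OF assms(4,5,6) step.prems Lpos mupos] .
    thus ?case using step by simp
  qed
  have main: "eig_v \<eta> lam s \<le> B" if "t \<le> s" "s \<le> T" for s
    using that
  proof (induction s rule: dec_induct)
    case base thus ?case unfolding B_def by simp
  next
    case (step s)
    have sT: "s < T" using step by simp
    have e: "\<eta> s > 0" "\<eta> s \<le> 1 / L" using bnd[OF sT] by auto
    have "\<eta> s * lam \<le> 1 / L * lam" using e lampos by (intro mult_right_mono) auto
    also have "\<dots> \<le> 1" using lamL Lpos by simp
    finally have el: "\<eta> s * lam \<le> 1" .
    have "eig_v \<eta> lam (Suc s) = (\<eta> s)^2 + (1 - \<eta> s * lam)^2 * eig_v \<eta> lam s" by (rule eig_v_Suc)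
    also have "\<dots> \<le> B" unfolding B_def
      by (rule step_bound[OF lampos e(1) el mono[OF step.hyps(1) sT]])
         (use step in \<open>simp add: B_def\<close>)
    finally show ?case .
  qed
  show ?thesis using main[OF assms(9,10)] unfolding B_def \<eta>_def L_def \<mu>_def .
qed

end
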